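(* Let $Z$ be a weakly efficient solution of the SDP relaxation described in the context, with first-row data $(z_+,z_-,\rho)$. If $\rho=1$, then $(z_+,z_-,1)$ is feasible and weakly efficient for the QCQP.
   Context: Let $k,m,n\in\mathbb{N}$. Let $A_c,A_\delta\in\mathbb{R}^{m\times n}$ with $A_\delta\ge 0$ entrywise, $b_c,b_\delta\in\mathbb{R}^m$ with $b_\delta\ge0$, $G\in\mathbb{R}^{k\times n}$, and $\ell,u\in\mathbb{R}^n$ with $\ell\le u$. All vector inequalities are componentwise. QCQP: variables $x_+,x_-\in\mathbb{R}^n_{\ge0}$, $r\in[0,1]$, subject to $A_cx_+-A_cx_-+rA_\delta x_++rA_\delta x_-+rb_\delta-b_c\le0$ and $\ell\le x_+-x_-\le u$; vector objective $F(x_+,x_-,r)=(G(x_+-x_-),-r)\in\mathbb{R}^{k+1}$, minimized in the Pareto sense. SDP relaxation: variable a symmetric positive semidefinite matrix $Z$ of size $(2n+2)\times(2n+2)$ written in block form with row/column blocks of sizes $1,n,n,1$: $Z=\begin{pmatrix} Z_{00} & z_+^T & z_-^T & \rho\\ z_+ & * & * & w_+\\ z_- & * & * & w_-\\ \rho & w_+^T & w_-^T & \sigma\end{pmatrix}$, with $z_\pm,w_\pm\in\mathbb{R}^n$, $\rho,\sigma\in\mathbb{R}$. Constraints: $Z_{00}=1$; $A_cz_+-A_cz_-+A_\delta(w_++w_-)+\rho\, b_\delta-b_c\le0$; $\ell\le z_+-z_-\le u$; $z_+,z_-\ge0$, $\rho\ge0$, $w_+,w_-\ge0$; $\sigma\le1$.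 Vector objective $(G(z_+-z_-),-\rho)\in\mathbb{R}^{k+1}$, minimized in the Pareto sense. Efficiency (for minimizing a vector function $f$ over a feasible set $\mathcal{X}$): $x^*\in\mathcal{X}$ is efficient if there is no $x\in\mathcal{X}$ with $f(x)\le f(x^* )$ and $f(x)\ne f(x^* )$; weakly efficient if there is no $x\in\mathcal{X}$ with $f(x)<f(x^* )$ (all components strict). *)

theory Defs
  imports Complex_Main
begin

text \<open>Dimensions k, m, n are natural numbers. Vectors in R^n are functions nat => real
  (only indices < n matter), matrices in R^(p x q) are functions nat => nat => real
  (only indices < p, < q matter).\<close>

definition mvec :: "nat \<Rightarrow> (nat \<Rightarrow> nat \<Rightarrow> real) \<Rightarrow> (nat \<Rightarrow> real) \<Rightarrow> nat \<Rightarrow> real" where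
  "mvec n A x = (\<lambda>i. \<Sum>j<n. A i j * x j)"

definition efficient :: "('a \<Rightarrow> bool) \<Rightarrow> nat \<Rightarrow> ('a \<Rightarrow> nat \<Rightarrow> real) \<Rightarrow> 'a \<Rightarrow> bool" where
  "efficient feas K f x \<longleftrightarrow> feas x \<and>
     \<not> (\<exists>y. feas y \<and> (\<forall>i<K. f y i \<le> f x i) \<and> (\<exists>i<K. f y i \<noteq> f x i))"

definition weakly_efficient :: "('a \<Rightarrow> bool) \<Rightarrow> nat \<Rightarrow> ('a \<Rightarrow> nat \<Rightarrow> real) \<Rightarrow> 'a \<Rightarrow> bool" where
  "weakly_efficient feas K f x \<longleftrightarrow> feas x \<and> \<not> (\<exists>y. feas y \<and> (\<forall>i<K. f y i < f x i))"

definition qcqp_feasible ::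
  "nat \<Rightarrow> nat \<Rightarrow> (nat \<Rightarrow> nat \<Rightarrow> real) \<Rightarrow> (nat \<Rightarrow> nat \<Rightarrow> real) \<Rightarrow> (nat \<Rightarrow> real) \<Rightarrow> (nat \<Rightarrow> real)
   \<Rightarrow> (nat \<Rightarrow> real) \<Rightarrow> (nat \<Rightarrow> real) \<Rightarrow> (nat \<Rightarrow> real) \<times> (nat \<Rightarrow> real) \<times> real \<Rightarrow> bool" where
  "qcqp_feasible m n Ac Ad bc bd l u = (\<lambda>(xp, xm, r).
     (\<forall>j<n. 0 \<le> xp j \<and> 0 \<le> xm j) \<and> 0 \<le> r \<and> r \<le> 1 \<and>
     (\<forall>i<m. mvec n Ac xp i - mvec n Ac xm i + r * mvec n Ad xp i + r * mvec n Ad xm i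
              + r * bd i - bc i \<le> 0) \<and>
     (\<forall>j<n. l j \<le> xp j - xm j \<and> xp j - xm j \<le> u j))"

definition qcqp_obj ::
  "nat \<Rightarrow> nat \<Rightarrow> (nat \<Rightarrow> nat \<Rightarrow> real) \<Rightarrow> (nat \<Rightarrow> real) \<times> (nat \<Rightarrow> real) \<times> real \<Rightarrow> nat \<Rightarrow> real" where
  "qcqp_obj k n G = (\<lambda>(xp, xm, r) i.
     if i < k then mvec n G (\<lambda>j. xp j - xm j) i else - r)"

text \<open>Z is a (2n+2)x(2n+2) matrix with indices 0..2n+1; block rows/columns:
  0 | 1..n | n+1..2n | 2n+1.\<close>

definition sdp_zp :: "nat \<Rightarrow> (nat \<Rightarrow> nat \<Rightarrow> real) \<Rightarrow> nat \<Rightarrow> real" where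
  "sdp_zp n Z = (\<lambda>j. Z 0 (1 + j))"
definition sdp_zm :: "nat \<Rightarrow> (nat \<Rightarrow> nat \<Rightarrow> real) \<Rightarrow> nat \<Rightarrow> real" where
  "sdp_zm n Z = (\<lambda>j. Z 0 (n + 1 + j))"
definition sdp_rho :: "nat \<Rightarrow> (nat \<Rightarrow> nat \<Rightarrow> real) \<Rightarrow> real" where
  "sdp_rho n Z = Z 0 (2 * n + 1)"
definition sdp_wp :: "nat \<Rightarrow> (nat \<Rightarrow> nat \<Rightarrow> real) \<Rightarrow> nat \<Rightarrow> real" where
  "sdp_wp n Z = (\<lambda>j. Z (1 + j) (2 * n + 1))"
definition sdp_wm :: "nat \<Rightarrow> (nat \<Rightarrow> nat \<Rightarrow> real) \<Rightarrow> nat \<Rightarrow> real" where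
  "sdp_wm n Z = (\<lambda>j. Z (n + 1 + j) (2 * n + 1))"
definition sdp_sigma :: "nat \<Rightarrow> (nat \<Rightarrow> nat \<Rightarrow> real) \<Rightarrow> real" where
  "sdp_sigma n Z = Z (2 * n + 1) (2 * n + 1)"

definition psd :: "nat \<Rightarrow> (nat \<Rightarrow> nat \<Rightarrow> real) \<Rightarrow> bool" where
  "psd N Z \<longleftrightarrow> (\<forall>i<N. \<forall>j<N. Z i j = Z j i) \<and>
     (\<forall>v. 0 \<le> (\<Sum>i<N. \<Sum>j<N. v i * Z i j * v j))"

definition sdp_feasible ::
  "nat \<Rightarrow> nat \<Rightarrow> (nat \<Rightarrow> nat \<Rightarrow> real) \<Rightarrow> (nat \<Rightarrow> nat \<Rightarrow> real) \<Rightarrow> (nat \<Rightarrow> real) \<Rightarrow> (nat \<Rightarrow> real)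
   \<Rightarrow> (nat \<Rightarrow> real) \<Rightarrow> (nat \<Rightarrow> real) \<Rightarrow> (nat \<Rightarrow> nat \<Rightarrow> real) \<Rightarrow> bool" where
  "sdp_feasible m n Ac Ad bc bd l u Z \<longleftrightarrow>
     psd (2 * n + 2) Z \<and> Z 0 0 = 1 \<and>
     (\<forall>i<m. mvec n Ac (sdp_zp n Z) i - mvec n Ac (sdp_zm n Z) i
              + mvec n Ad (\<lambda>j. sdp_wp n Z j + sdp_wm n Z j) i
              + sdp_rho n Z * bd i - bc i \<le> 0) \<and>
     (\<forall>j<n. l j \<le> sdp_zp n Z j - sdp_zm n Z j \<and> sdp_zp n Z j - sdp_zm n Z j \<le> u j) \<and>
     (\<forall>j<n. 0 \<le> sdp_zp n Z j \<and> 0 \<le> sdp_zm n Z j) \<and> 0 \<le> sdp_rho n Z \<and>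
     (\<forall>j<n. 0 \<le> sdp_wp n Z j \<and> 0 \<le> sdp_wm n Z j) \<and>
     sdp_sigma n Z \<le> 1"

definition sdp_obj ::
  "nat \<Rightarrow> nat \<Rightarrow> (nat \<Rightarrow> nat \<Rightarrow> real) \<Rightarrow> (nat \<Rightarrow> nat \<Rightarrow> real) \<Rightarrow> nat \<Rightarrow> real" where
  "sdp_obj k n G Z = (\<lambda>i.
     if i < k then mvec n G (\<lambda>j. sdp_zp n Z j - sdp_zm n Z j) i else - sdp_rho n Z)"

end

theory Submission
  imports Defs
begin

lemma quad_zero:
  fixes d c :: real
  assumes "\<forall>t. 0 \<le> 2*t*d + t^2*c"
  shows "d = 0"
proof (rule ccontr)
  assume "d \<noteq> 0"
  define s where "s = 1 / (\<bar>c\<bar> + 1)"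
  have s0: "s > 0" unfolding s_def by (simp add: add_pos_nonneg)
  have "s * c < 1" unfolding s_def by (simp add: field_simps)
  hence neg: "s * c - 2 < 0" by simp
  have "0 \<le> 2*(-d*s)*d + (-d*s)^2*c" using assms by blast
  also have "\<dots> = s * d^2 * (s*c - 2)" by (simp add: power2_eq_square algebra_simps)
  finally have "0 \<le> s * d^2 * (s*c - 2)" .
  moreover have "s * d^2 > 0" using s0 \<open>d \<noteq> 0\<close> by simp
  ultimately show False using neg by (simp add: mult_pos_neg zero_le_mult_iff)
qed

lemma quad3:
  fixes Z :: "nat \<Rightarrow> nat \<Rightarrow> real" and x y w :: real
  assumes "a < N" "b < N" "c < N" "a \<noteq> b" "a \<noteq> c" "b \<noteq> c"
  defines "v \<equiv> (\<lambda>i. if i = a then x else if i = b then y else if i = c then w else 0)"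
  shows "(\<Sum>i<N. \<Sum>j<N. v i * Z i j * v j) =
     x*Z a a*x + x*Z a b*y + x*Z a c*w + y*Z b a*x + y*Z b b*y + y*Z b c*w
     + w*Z c a*x + w*Z c b*y + w*Z c c*w"
proof -
  have S: "{a,b,c} \<subseteq> {..<N}" using assms by auto
  have inner: "(\<Sum>j<N. v i * Z i j * v j) = (\<Sum>j\<in>{a,b,c}. v i * Z i j * v j)" for i
  proof (rule sum.mono_neutral_right)
    show "\<forall>j\<in>{..<N} - {a, b, c}. v i * Z i j * v j = 0"
    proof
      fix j assume "j \<in> {..<N} - {a, b, c}"
      hence "v j = 0" by (auto simp: v_def)
      thus "v i * Z i j * v j = 0" by simp
    qed
  qed (use S in auto)
  have "(\<Sum>i<N. \<Sum>j<N. v i * Z i j * v j) = (\<Sum>i\<in>{a,b,c}. \<Sum>j\<in>{a,b,c}. v i * Z i j * v j)"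
    unfolding inner
  proof (rule sum.mono_neutral_right)
    show "\<forall>i\<in>{..<N} - {a, b, c}. (\<Sum>j\<in>{a,b,c}. v i * Z i j * v j) = 0"
    proof
      fix i assume "i \<in> {..<N} - {a, b, c}"
      hence "v i = 0" by (auto simp: v_def)
      thus "(\<Sum>j\<in>{a,b,c}. v i * Z i j * v j) = 0" by simp
    qed
  qed (use S in auto)
  also have "\<dots> = x*Z a a*x + x*Z a b*y + x*Z a c*w + y*Z b a*x + y*Z b b*y + y*Z b c*w
     + w*Z c a*x + w*Z c b*y + w*Z c c*w"
    using assms(4-6) by (simp add: v_def algebra_simps)
  finally show ?thesis .
qed

lemma w_eq_z:
  fixes Z :: "nat \<Rightarrow> nat \<Rightarrow> real"
  assumes psd: "psd N Z" and Z00: "Z 0 0 = 1" and rho: "Z 0 L = 1" and sig: "Z L L \<le> 1"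
    and L: "L < N" "0 < L" and p: "0 < p" "p < L"
  shows "Z p L = Z 0 p"
proof -
  have sym: "\<And>i j. i < N \<Longrightarrow> j < N \<Longrightarrow> Z i j = Z j i"
    and Q: "\<And>v. 0 \<le> (\<Sum>i<N. \<Sum>j<N. v i * Z i j * v j)" using psd unfolding psd_def by auto
  have pN: "p < N" using p L by simp
  have symL: "Z L 0 = 1" using sym[of L 0] L rho by simp
  have "0 \<le> (1::real)*Z 0 0*1 + 1*Z 0 p*0 + 1*Z 0 L*(-1) + 0*Z p 0*1 + 0*Z p p*0 + 0*Z p L*(-1)
     + (-1)*Z L 0*1 + (-1)*Z L p*0 + (-1)*Z L L*(-1)"
    using Q[of "\<lambda>i. if i = 0 then 1 else if i = p then 0 else if i = L then -1 else 0"]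
      quad3[where a=0 and N=N and b=p and c=L and Z=Z and x=1 and y=0 and w="-1"] L p pN by simp
  hence sig1: "Z L L = 1" using Z00 rho symL sig by simp
  have "0 \<le> 2*t*(Z 0 p - Z p L) + t^2 * Z p p" for t
  proof -
    have "0 \<le> (1::real)*Z 0 0*1 + 1*Z 0 p*t + 1*Z 0 L*(-1) + t*Z p 0*1 + t*Z p p*t + t*Z p L*(-1)
     + (-1)*Z L 0*1 + (-1)*Z L p*t + (-1)*Z L L*(-1)"
      using Q[of "\<lambda>i. if i = 0 then 1 else if i = p then t else if i = L then -1 else 0"]
        quad3[where a=0 and N=N and b=p and c=L and Z=Z and x=1 and y=t and w="-1"] L p pN by simp
    moreover have "Z p 0 = Z 0 p" "Z L p = Z p L" using sym pN L by auto
    ultimately show ?thesis using Z00 rho symL sig1 by (simp add: power2_eq_square algebra_simps)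
  qed
  hence "Z 0 p - Z p L = 0" by (intro quad_zero) blast
  thus ?thesis by simp
qed

theorem mainTheorem4:
  fixes k m n :: nat
    and Ac Ad G :: "nat \<Rightarrow> nat \<Rightarrow> real"
    and bc bd l u :: "nat \<Rightarrow> real"
    and Z :: "nat \<Rightarrow> nat \<Rightarrow> real"
  assumes "\<forall>i<m. \<forall>j<n. 0 \<le> Ad i j"
    and "\<forall>i<m. 0 \<le> bd i"
    and "\<forall>j<n. l j \<le> u j"
    and "weakly_efficient (sdp_feasible m n Ac Ad bc bd l u) (k + 1) (sdp_obj k n G) Z"
    and "sdp_rho n Z = 1"
  shows "qcqp_feasible m n Ac Ad bc bd l u (sdp_zp n Z, sdp_zm n Z, 1)
    \<and> weakly_efficient (qcqp_feasible m n Ac Ad bc bd l u) (k + 1) (qcqp_obj k n G)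
        (sdp_zp n Z, sdp_zm n Z, 1)"
proof -
  have F: "sdp_feasible m n Ac Ad bc bd l u Z" using assms(4) unfolding weakly_efficient_def by blast
  hence psd: "psd (2*n+2) Z" and Z00: "Z 0 0 = 1" and sig: "Z (2*n+1) (2*n+1) \<le> 1"
    unfolding sdp_feasible_def sdp_sigma_def by auto
  have rho: "Z 0 (2*n+1) = 1" using assms(5) unfolding sdp_rho_def .
  have wp: "sdp_wp n Z j = sdp_zp n Z j" if "j < n" for j
    unfolding sdp_wp_def sdp_zp_def
    by (rule w_eq_z[OF psd Z00 rho sig]) (use that in auto)
  have wm: "sdp_wm n Z j = sdp_zm n Z j" if "j < n" for j
    unfolding sdp_wm_def sdp_zm_def
    by (rule w_eq_z[OF psd Z00 rho sig]) (use that in auto)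
  have mv: "mvec n Ad (\<lambda>j. sdp_wp n Z j + sdp_wm n Z j) i
      = mvec n Ad (sdp_zp n Z) i + mvec n Ad (sdp_zm n Z) i" for i
    unfolding mvec_def by (simp add: wp wm distrib_left sum.distrib)
  have feas: "qcqp_feasible m n Ac Ad bc bd l u (sdp_zp n Z, sdp_zm n Z, 1)"
    using F assms(5) unfolding qcqp_feasible_def sdp_feasible_def by (auto simp: mv)
  have we: "weakly_efficient (qcqp_feasible m n Ac Ad bc bd l u) (k + 1) (qcqp_obj k n G)
        (sdp_zp n Z, sdp_zm n Z, 1)"
    unfolding weakly_efficient_def
  proof (intro conjI feas notI)
    assume "\<exists>y. qcqp_feasible m n Ac Ad bc bd l u y \<and>
        (\<forall>i<k + 1. qcqp_obj k n G y i < qcqp_obj k n G (sdp_zp n Z, sdp_zm n Z, 1) i)"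
    then obtain xp xm r where y: "qcqp_feasible m n Ac Ad bc bd l u (xp, xm, r)"
      and lt: "\<forall>i<k + 1. qcqp_obj k n G (xp, xm, r) i < qcqp_obj k n G (sdp_zp n Z, sdp_zm n Z, 1) i"
      by auto
    have "r \<le> 1" using y unfolding qcqp_feasible_def by auto
    moreover have "- r < - 1" using lt[rule_format, of k] unfolding qcqp_obj_def by simp
    ultimately show False by simp
  qed
  show ?thesis using feas we by blast
qed

end
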